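(* Let $r \geq 1$ be an integer. Then for every integer $n \geq 0$, $$\sum_{k=0}^{n} \frac{s(n,k)}{k+r} = \sum_{k=0}^{r-1} \lambda_{r,n,k}\, B_{n+k}^*,$$ where for each $k \in \{0,1,\dots,r-1\}$, $$\lambda_{r,n,k} := \sum_{\ell=0}^{r-1-k} \binom{r-1}{\ell} S(r-1-\ell,k)\, n^{\ell}$$ (with the convention $0^0 = 1$).
   Context: For $n \geq 0$, $X^{\underline{n}} := X(X-1)\cdots(X-n+1)$ ($X^{\underline{0}}=1$). The (signed) Stirling numbers of the first kind $s(n,k)$ are defined by $X^{\underline{n}} = \sum_{k=0}^{n} s(n,k) X^k$, and the Stirling numbers of the second kind $S(n,k)$ by $X^n = \sum_{k=0}^{n} S(n,k) X^{\underline{k}}$ (for all $n\ge 0$), with $s(n,k)=S(n,k)=0$ when $n<k$; in particular $S(0,0)=1$. The Bernoulli numbers of the second kind $B_n^*$ are defined by $\frac{t}{\log(1+t)} = \sum_{n \ge 0} B_n^* \frac{t^n}{n!}$ (equivalently $B_n^* = \int_0^1 x^{\underline{n}}\,dx$). *)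

theory Defs
  imports "HOL-Analysis.Analysis" "HOL-Combinatorics.Stirling"
begin

definition falling_fact :: "real \<Rightarrow> nat \<Rightarrow> real" where
  "falling_fact x n = (\<Prod>i<n. x - real i)"

definition stirling1s :: "nat \<Rightarrow> nat \<Rightarrow> int" where
  "stirling1s n k = (-1) ^ (n - k) * int (stirling n k)"

definition bernoulli2 :: "nat \<Rightarrow> real" where
  "bernoulli2 n = integral {0..1} (\<lambda>x. falling_fact x n)"

definition lambda_coeff :: "nat \<Rightarrow> nat \<Rightarrow> nat \<Rightarrow> real" where
  "lambda_coeff r n k =
     (\<Sum>l = 0..r - 1 - k. real ((r - 1) choose l) * real (Stirling (r - 1 - l) k) * real n ^ l)"

end

theory Submission
  imports Defs
begin

lemma ff_Suc: "falling_fact x (Suc k) = falling_fact x k * (x - real k)"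
  by (simp add: falling_fact_def)

lemma ff_add: "falling_fact x (n + k) = falling_fact x n * falling_fact (x - real n) k"
  by (induction k) (simp_all add: falling_fact_def algebra_simps)

lemma ff_pochhammer: "falling_fact x n = (-1) ^ n * pochhammer (-x) n"
proof -
  have p: "pochhammer (-x) n = (\<Prod>i<n. -x + real i)"
    by (simp add: pochhammer_prod lessThan_atLeast0)
  have "(\<Prod>i<n. (-1) * (-x + real i)) = (\<Prod>i<n. (-1::real)) * (\<Prod>i<n. (-x + real i))"
    by (rule prod.distrib)
  then have "(-1) ^ n * pochhammer (-x) n = (\<Prod>i<n. (-1) * (-x + real i))"
    unfolding p by simp
  also have "\<dots> = falling_fact x n" by (simp add: falling_fact_def)
  finally show ?thesis by simp
qed

lemma ff_stirling1:
  "falling_fact x n = (\<Sum>k = 0..n. real_of_int (stirling1s n k) * x ^ k)"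
proof -
  have "falling_fact x n = (-1) ^ n * (\<Sum>k\<le>n. real (stirling n k) * (-x) ^ k)"
    by (simp add: ff_pochhammer stirling_pochhammer)
  also have "\<dots> = (\<Sum>k\<le>n. real_of_int (stirling1s n k) * x ^ k)"
    unfolding sum_distrib_left
  proof (rule sum.cong)
    fix k assume "k \<in> {..n}"
    then have "(-1::real) ^ n = (-1) ^ (n - k) * (-1) ^ k"
      by (simp add: power_add[symmetric])
    then have s: "(-1::real) ^ n * (-1) ^ k = (-1) ^ (n - k)"
    proof -
      have e: "n - k + k + k = (n - k) + 2 * k" by simp
      show ?thesis using \<open>(-1::real) ^ n = _\<close>
        by (simp add: mult.assoc flip: power_add) (simp only: e power_add power_mult, simp)
    qed
    have "(-1) ^ n * (real (stirling n k) * (-x) ^ k) = ((-1::real) ^ n * (-1) ^ k) * real (stirling n k) * x ^ k"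
      by (simp add: power_minus[of x])
    also have "\<dots> = real_of_int (stirling1s n k) * x ^ k"
      unfolding s by (simp add: stirling1s_def)
    finally show "(-1) ^ n * (real (stirling n k) * (-x) ^ k) = real_of_int (stirling1s n k) * x ^ k" .
  qed simp
  finally show ?thesis by (simp add: atLeast0AtMost)
qed

lemma pow_Stirling:
  "x ^ m = (\<Sum>k\<le>m. real (Stirling m k) * falling_fact x k)"
proof (induction m)
  case 0 then show ?case by (simp add: falling_fact_def)
next
  case (Suc m)
  have "x ^ Suc m = (\<Sum>k\<le>m. real (Stirling m k) * (x * falling_fact x k))"
    by (simp add: Suc sum_distrib_left algebra_simps)
  also have "\<dots> = (\<Sum>k\<le>m. real (Stirling m k) * falling_fact x (Suc k))
                 + (\<Sum>k\<le>m. real k * real (Stirling m k) * falling_fact x k)"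
    by (simp add: ff_Suc algebra_simps sum.distrib[symmetric])
  also have "(\<Sum>k\<le>m. real k * real (Stirling m k) * falling_fact x k)
           = (\<Sum>k\<le>Suc m. real k * real (Stirling m k) * falling_fact x k)"
    by simp
  also have "\<dots> = (\<Sum>k\<le>m. real (Suc k) * real (Stirling m (Suc k)) * falling_fact x (Suc k))"
    by (subst sum.atMost_Suc_shift) simp
  also have "(\<Sum>k\<le>m. real (Stirling m k) * falling_fact x (Suc k)) + \<dots>
      = (\<Sum>k\<le>m. real (Stirling (Suc m) (Suc k)) * falling_fact x (Suc k))"
    by (simp add: sum.distrib[symmetric] algebra_simps)
  also have "\<dots> = (\<Sum>k\<le>Suc m. real (Stirling (Suc m) k) * falling_fact x k)"
    unfolding sum.atMost_Suc_shift[of _ m] by simp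
  finally show ?case .
qed


lemma int_pow: "((\<lambda>x::real. x ^ m) has_integral 1 / real (Suc m)) {0..1}"
proof -
  have "((\<lambda>x::real. x ^ m) has_integral ((\<lambda>x. x ^ Suc m / real (Suc m)) 1 - (\<lambda>x. x ^ Suc m / real (Suc m)) 0)) {0..1}"
    apply (rule fundamental_theorem_of_calculus)
     apply simp
    unfolding has_real_derivative_iff_has_vector_derivative[symmetric]
    apply (auto intro!: derivative_eq_intros simp del: of_nat_Suc)
    apply (cases m)
     apply (simp_all add: field_simps)
    done
  then show ?thesis by simp
qed

lemma cont_ff: "continuous_on S (\<lambda>x. falling_fact x m)"
  unfolding falling_fact_def by (intro continuous_intros)

lemma ident:
  "falling_fact x n * x ^ m = (\<Sum>k\<le>m. (\<Sum>l = 0..m - k. real (m choose l) * real (Stirling (m - l) k) * real n ^ l) * falling_fact x (n + k))"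
proof -
  define y where "y = x - real n"
  have "x = real n + y" by (simp add: y_def)
  then have "x ^ m = (\<Sum>l\<le>m. real (m choose l) * real n ^ l * y ^ (m - l))"
    by (simp add: binomial_ring)
  also have "\<dots> = (\<Sum>l\<le>m. \<Sum>k\<le>m. real (m choose l) * real n ^ l * (real (Stirling (m - l) k) * falling_fact y k))"
  proof (rule sum.cong[OF refl])
    fix l assume "l \<in> {..m}"
    have "y ^ (m - l) = (\<Sum>k\<le>m - l. real (Stirling (m - l) k) * falling_fact y k)"
      by (rule pow_Stirling)
    also have "\<dots> = (\<Sum>k\<le>m. real (Stirling (m - l) k) * falling_fact y k)"
      by (rule sum.mono_neutral_left) auto
    finally show "real (m choose l) * real n ^ l * y ^ (m - l) = (\<Sum>k\<le>m. real (m choose l) * real n ^ l * (real (Stirling (m - l) k) * falling_fact y k))"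
      by (simp add: sum_distrib_left)
  qed
  finally have "falling_fact x n * x ^ m = (\<Sum>l\<le>m. \<Sum>k\<le>m. falling_fact x n * (real (m choose l) * real n ^ l * (real (Stirling (m - l) k) * falling_fact y k)))"
    by (simp add: sum_distrib_left)
  also have "\<dots> = (\<Sum>l\<le>m. \<Sum>k\<le>m. real (m choose l) * real (Stirling (m - l) k) * real n ^ l * falling_fact x (n + k))"
    by (intro sum.cong refl) (simp add: ff_add y_def mult_ac)
  also have "\<dots> = (\<Sum>k\<le>m. \<Sum>l\<le>m. real (m choose l) * real (Stirling (m - l) k) * real n ^ l * falling_fact x (n + k))"
    by (rule sum.swap)
  also have "\<dots> = (\<Sum>k\<le>m. (\<Sum>l = 0..m - k. real (m choose l) * real (Stirling (m - l) k) * real n ^ l) * falling_fact x (n + k))"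
  proof (rule sum.cong[OF refl])
    fix k assume k: "k \<in> {..m}"
    have "(\<Sum>l\<le>m. real (m choose l) * real (Stirling (m - l) k) * real n ^ l * falling_fact x (n + k))
        = (\<Sum>l = 0..m - k. real (m choose l) * real (Stirling (m - l) k) * real n ^ l * falling_fact x (n + k))"
      using k by (intro sum.mono_neutral_right) auto
    then show "(\<Sum>l\<le>m. real (m choose l) * real (Stirling (m - l) k) * real n ^ l * falling_fact x (n + k))
        = (\<Sum>l = 0..m - k. real (m choose l) * real (Stirling (m - l) k) * real n ^ l) * falling_fact x (n + k)"
      by (simp add: sum_distrib_right)
  qed
  finally show ?thesis .
qed

theorem theorem6:
  fixes r n :: nat
  assumes "r \<ge> 1"
  shows "(\<Sum>k = 0..n. real_of_int (stirling1s n k) / real (k + r))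
         = (\<Sum>k = 0..r - 1. lambda_coeff r n k * bernoulli2 (n + k))"
proof -
  define m where "m = r - 1"
  have r: "r = Suc m" using assms by (simp add: m_def)
  have f1: "(\<lambda>x. falling_fact x n * x ^ m) = (\<lambda>x. \<Sum>k = 0..n. real_of_int (stirling1s n k) * x ^ (k + m))"
    by (simp add: ff_stirling1 sum_distrib_right power_add mult.assoc)
  have "((\<lambda>x. \<Sum>k = 0..n. real_of_int (stirling1s n k) * x ^ (k + m)) has_integral
        (\<Sum>k = 0..n. real_of_int (stirling1s n k) * (1 / real (Suc (k + m))))) {0..1}"
    by (intro has_integral_sum has_integral_mult_right int_pow) auto
  then have I1: "((\<lambda>x. falling_fact x n * x ^ m) has_integral
        (\<Sum>k = 0..n. real_of_int (stirling1s n k) / real (k + r))) {0..1}"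
    unfolding f1 r by simp
  have f2: "(\<lambda>x. falling_fact x n * x ^ m) = (\<lambda>x. \<Sum>k\<le>m. lambda_coeff r n k * falling_fact x (n + k))"
    unfolding ident lambda_coeff_def m_def by simp
  have "((\<lambda>x. \<Sum>k\<le>m. lambda_coeff r n k * falling_fact x (n + k)) has_integral
        (\<Sum>k\<le>m. lambda_coeff r n k * bernoulli2 (n + k))) {0..1}"
    unfolding bernoulli2_def
    by (intro has_integral_sum has_integral_mult_right integrable_integral integrable_continuous_interval cont_ff) auto
  then have I2: "((\<lambda>x. falling_fact x n * x ^ m) has_integral
        (\<Sum>k = 0..r - 1. lambda_coeff r n k * bernoulli2 (n + k))) {0..1}"
    by (simp only: f2 m_def[symmetric] atLeast0AtMost)
  show ?thesis using has_integral_unique[OF I1 I2] .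
qed

end
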